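(* Let $\Gamma$ be a finite, compact, connected metric tree. Then $$\lambda_k\big(L^{\rm a/st}(\Gamma)\big)=\lambda_{k+1}\big(L^{\rm st}(\Gamma)\big)\qquad\text{for all }k\in\mathbb N.$$
   Context: A finite compact metric graph $\Gamma$ consists of finitely many edges $e_n=[x_{2n-1},x_{2n}]\subset\mathbb R$ of positive lengths and a vertex set $\mathcal V$ which is a partition of the set of all edge endpoints; a tree is a connected such graph without cycles. $f(x_j)$ denotes the limit of $f$ at endpoint $x_j$, and $\partial f(x_j)=f'(x_j)$ if $x_j$ is a left endpoint, $-f'(x_j)$ if a right endpoint. The standard Laplacian $L^{\rm st}(\Gamma)$ acts as $-f''$ on each edge with domain all $f\in W^2_2(\Gamma\setminus\mathcal V)=\bigoplus_nW^2_2(e_n)$ with, at every vertex $v$, $f(x_i)=f(x_j)$ for $x_i,x_j\in v$ and $\sum_{x_j\in v}\partial f(x_j)=0$. The anti-standard Laplacian $L^{\rm a/st}(\Gamma)$ acts as $-f''$ with domain all $f\in W^2_2(\Gamma\setminus\mathcal V)$ with, at every vertex $v$, $\sum_{x_j\in v}f(x_j)=0$ and $\partial f(x_i)=\partial f(x_j)$ for $x_i,x_j\in v$. Eigenvalues $\lambda_1\le\lambda_2\le\dots$ are counted with multiplicities. *)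

theory Defs
  imports "HOL-Analysis.Analysis" "HOL-Library.Function_Algebras"
begin

text \<open>Edges are indexed n = 0..N-1 and
  endpoints j = 0..2N-1; edge n is the interval [x (2n), x (2n+1)], so the endpoint
  2n is its left endpoint and 2n+1 its right endpoint (paper: x_{2n-1}, x_{2n}).\<close>

definition metric_graph :: "nat \<Rightarrow> (nat \<Rightarrow> real) \<Rightarrow> nat set set \<Rightarrow> bool" where
  "metric_graph N x V \<longleftrightarrow>
     (\<forall>n<N. x (2*n) < x (2*n+1)) \<and>
     (\<forall>v\<in>V. v \<noteq> {}) \<and> \<Union>V = {..<2*N} \<and>
     (\<forall>v\<in>V. \<forall>w\<in>V. v \<noteq> w \<longrightarrow> v \<inter> w = {})"

definition joins :: "nat set set \<Rightarrow> nat \<Rightarrow> nat set \<Rightarrow> nat set \<Rightarrow> bool" where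
  "joins V n u w \<longleftrightarrow> u \<in> V \<and> w \<in> V \<and>
     ((2*n \<in> u \<and> 2*n+1 \<in> w) \<or> (2*n \<in> w \<and> 2*n+1 \<in> u))"

definition graph_connected :: "nat \<Rightarrow> nat set set \<Rightarrow> bool" where
  "graph_connected N V \<longleftrightarrow>
     (\<forall>u\<in>V. \<forall>w\<in>V. (u, w) \<in> {(a, b). \<exists>n<N. joins V n a b}\<^sup>*)"

text \<open>A cycle: a closed walk of length m \<ge> 1 through pairwise distinct edges
  (loops and multiple edges give cycles).\<close>
definition has_cycle :: "nat \<Rightarrow> nat set set \<Rightarrow> bool" where
  "has_cycle N V \<longleftrightarrow>
     (\<exists>m (es :: nat \<Rightarrow> nat) (vs :: nat \<Rightarrow> nat set). m \<ge> 1 \<and> inj_on es {..<m} \<and>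
        (\<forall>i<m. es i < N \<and> joins V (es i) (vs i) (vs (Suc i))) \<and> vs m = vs 0)"

definition metric_tree :: "nat \<Rightarrow> (nat \<Rightarrow> real) \<Rightarrow> nat set set \<Rightarrow> bool" where
  "metric_tree N x V \<longleftrightarrow> metric_graph N x V \<and> graph_connected N V \<and> \<not> has_cycle N V"

text \<open>Functions on the graph: f n is the function on edge n (set to 0 off the edge).\<close>
definition edge_dom :: "(nat \<Rightarrow> real) \<Rightarrow> nat \<Rightarrow> real set" where
  "edge_dom x n = {x (2*n) .. x (2*n+1)}"

definition edge_deriv :: "(nat \<Rightarrow> real) \<Rightarrow> (nat \<Rightarrow> real \<Rightarrow> real) \<Rightarrow> nat \<Rightarrow> real \<Rightarrow> real" where
  "edge_deriv x f n t = vector_derivative (f n) (at t within edge_dom x n)"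

text \<open>f(x_j) and the normal derivative \<partial>f(x_j) at endpoint j.\<close>
definition endval :: "(nat \<Rightarrow> real) \<Rightarrow> (nat \<Rightarrow> real \<Rightarrow> real) \<Rightarrow> nat \<Rightarrow> real" where
  "endval x f j = f (j div 2) (x j)"

definition endderiv :: "(nat \<Rightarrow> real) \<Rightarrow> (nat \<Rightarrow> real \<Rightarrow> real) \<Rightarrow> nat \<Rightarrow> real" where
  "endderiv x f j = (if even j then edge_deriv x f (j div 2) (x j)
                     else - edge_deriv x f (j div 2) (x j))"

definition standard_cond :: "(nat \<Rightarrow> real) \<Rightarrow> nat set set \<Rightarrow> (nat \<Rightarrow> real \<Rightarrow> real) \<Rightarrow> bool" where
  "standard_cond x V f \<longleftrightarrow>
     (\<forall>v\<in>V. (\<forall>i\<in>v. \<forall>j\<in>v. endval x f i = endval x f j) \<and> (\<Sum>j\<in>v. endderiv x f j) = 0)"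

definition antistandard_cond :: "(nat \<Rightarrow> real) \<Rightarrow> nat set set \<Rightarrow> (nat \<Rightarrow> real \<Rightarrow> real) \<Rightarrow> bool" where
  "antistandard_cond x V f \<longleftrightarrow>
     (\<forall>v\<in>V. (\<Sum>j\<in>v. endval x f j) = 0 \<and> (\<forall>i\<in>v. \<forall>j\<in>v. endderiv x f i = endderiv x f j))"

text \<open>Eigenspace of -d^2/dx^2 with the given vertex conditions for the value lam:
  on each edge f is twice differentiable on the closed edge with -f'' = lam f
  (for such functions this is equivalent to membership in W^2_2(e_n) with -f'' = lam f).\<close>
definition eigenspace ::
  "nat \<Rightarrow> (nat \<Rightarrow> real) \<Rightarrow> ((nat \<Rightarrow> real \<Rightarrow> real) \<Rightarrow> bool) \<Rightarrow> real \<Rightarrow> (nat \<Rightarrow> real \<Rightarrow> real) set" where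
  "eigenspace N x cond lam = {f.
     (\<forall>n t. (N \<le> n \<or> t \<notin> edge_dom x n) \<longrightarrow> f n t = 0) \<and>
     (\<forall>n<N. \<forall>t\<in>edge_dom x n.
        (f n has_vector_derivative edge_deriv x f n t) (at t within edge_dom x n) \<and>
        (edge_deriv x f n has_vector_derivative (- lam * f n t)) (at t within edge_dom x n)) \<and>
     cond f}"

definition fscale :: "real \<Rightarrow> (nat \<Rightarrow> real \<Rightarrow> real) \<Rightarrow> (nat \<Rightarrow> real \<Rightarrow> real)" where
  "fscale c f = (\<lambda>n t. c * f n t)"

definition multiplicity_ev :: "nat \<Rightarrow> (nat \<Rightarrow> real) \<Rightarrow> ((nat \<Rightarrow> real \<Rightarrow> real) \<Rightarrow> bool) \<Rightarrow> real \<Rightarrow> nat" where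
  "multiplicity_ev N x cond lam = vector_space.dim fscale (eigenspace N x cond lam)"

definition ev_count :: "nat \<Rightarrow> (nat \<Rightarrow> real) \<Rightarrow> ((nat \<Rightarrow> real \<Rightarrow> real) \<Rightarrow> bool) \<Rightarrow> real \<Rightarrow> nat" where
  "ev_count N x cond mu =
     (\<Sum>lam\<in>{lam. lam \<le> mu \<and> 0 < multiplicity_ev N x cond lam}. multiplicity_ev N x cond lam)"

text \<open>lambda_k (k \<ge> 1): the k-th eigenvalue in nondecreasing order counted with multiplicities.\<close>
definition lap_eigenvalue :: "nat \<Rightarrow> (nat \<Rightarrow> real) \<Rightarrow> ((nat \<Rightarrow> real \<Rightarrow> real) \<Rightarrow> bool) \<Rightarrow> nat \<Rightarrow> real" where
  "lap_eigenvalue N x cond k = Inf {mu. k \<le> ev_count N x cond mu}"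

end

theory Submission
  imports Defs
begin

lemma fscale_vs: "vector_space fscale"
  by unfold_locales (auto simp: fscale_def plus_fun_def algebra_simps fun_eq_iff)

interpretation FS: vector_space fscale by (rule fscale_vs)
interpretation FP: vector_space_pair fscale fscale by unfold_locales

lemma dim_transfer:
  assumes sub: "FS.subspace E"
    and DE: "\<And>f. f \<in> E \<Longrightarrow> D f \<in> E'"
    and D'E: "\<And>g. g \<in> E' \<Longrightarrow> D' g \<in> E"
    and inv1: "\<And>f. f \<in> E \<Longrightarrow> D' (D f) = f"
    and inv2: "\<And>g. g \<in> E' \<Longrightarrow> D (D' g) = g"
    and add: "\<And>f g. f \<in> E \<Longrightarrow> g \<in> E \<Longrightarrow> D (f + g) = D f + D g"
    and scl: "\<And>f c. f \<in> E \<Longrightarrow> D (fscale c f) = fscale c (D f)"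
  shows "FS.dim E' = FS.dim E"
proof -
  obtain B where B: "B \<subseteq> E" "FS.independent B" "E \<subseteq> FS.span B" "card B = FS.dim E"
    using FS.basis_exists[of E] by blast
  have spB: "FS.span B = E"
    using B(1,3) FS.span_subspace sub by blast
  define L where "L = FP.construct B D"
  have lin: "Vector_Spaces.linear fscale fscale L" unfolding L_def by (rule FP.linear_construct[OF B(2)])
  interpret lL: Vector_Spaces.linear fscale fscale L by (rule lin)
  have D0: "D 0 = 0"
  proof -
    have "0 \<in> E" using sub FS.subspace_0 by blast
    then have "D (fscale 0 0) = fscale 0 (D 0)" by (rule scl)
    moreover have "fscale 0 (0::nat\<Rightarrow>real\<Rightarrow>real) = 0" by (simp add: fscale_def fun_eq_iff)
    moreover have "fscale 0 (D 0) = 0" by (simp add: fscale_def fun_eq_iff)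
    ultimately show ?thesis by simp
  qed
  have LD: "L f = D f" if "f \<in> E" for f
  proof -
    have "f \<in> FS.span B" using that spB by simp
    then have "f \<in> E \<and> L f = D f"
    proof (induction rule: FS.span_induct_alt)
      case base
      have "(0::nat\<Rightarrow>real\<Rightarrow>real) \<in> E" using sub FS.subspace_0 by blast
      then show ?case using D0 lL.zero by metis
    next
      case (step c b y)
      have bE: "b \<in> E" using step B(1) by auto
      have Lb: "L b = D b" unfolding L_def using FP.construct_basis[OF B(2) step(1)] .
      have cb: "fscale c b \<in> E" using sub bE FS.subspace_scale by blast
      have "fscale c b + y \<in> E" using sub cb step FS.subspace_add by blast
      moreover have "L (fscale c b + y) = D (fscale c b + y)"
        using step Lb cb bE by (simp add: lL.add lL.scale add scl)
      ultimately show ?case by (rule conjI)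
    qed
    then show ?thesis by simp
  qed
  have injE: "inj_on L E"
  proof (rule inj_onI)
    fix f g assume fg: "f \<in> E" "g \<in> E" "L f = L g"
    then have "D f = D g" using LD by simp
    then have "D' (D f) = D' (D g)" by simp
    then show "f = g" using inv1 fg(1,2) by simp
  qed
  have img: "L ` E = E'"
  proof
    show "L ` E \<subseteq> E'" using LD DE by auto
    show "E' \<subseteq> L ` E"
    proof
      fix g assume "g \<in> E'"
      then have "g = L (D' g)" "D' g \<in> E" using LD D'E inv2 by auto
      then show "g \<in> L ` E" by blast
    qed
  qed
  have indep: "FS.independent (L ` B)"
  proof -
    have "inj_on L (FS.span B)" using injE spB by simp
    then show ?thesis using lL.dependent_inj_imageD[of B] B(2) by blast
  qed
  have cardLB: "card (L ` B) = card B"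
    using card_image inj_on_subset[OF injE B(1)] by blast
  have "FS.span (L ` B) = L ` FS.span B" by (rule lL.span_image)
  also have "\<dots> = E'" using spB img by simp
  finally have "FS.span (L ` B) = E'" .
  then have "FS.span (L ` B) = FS.span E'" by (metis FS.span_span)
  then have "FS.dim E' = card (L ` B)" using FS.dim_eq_card indep by blast
  then show ?thesis using cardLB B(4) by simp
qed



definition vert :: "nat set set \<Rightarrow> nat \<Rightarrow> nat set" where
  "vert V j = (THE v. v \<in> V \<and> j \<in> v)"

abbreviation Lv where "Lv V n \<equiv> vert V (2*n)"
abbreviation Rv where "Rv V n \<equiv> vert V (2*n+1)"

definition Rel :: "nat set set \<Rightarrow> nat set \<Rightarrow> (nat set \<times> nat set) set" where
  "Rel V F = {(a,b). \<exists>n\<in>F. joins V n a b}"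

lemma vert_eq:
  assumes "metric_graph N x V" "v \<in> V" "j \<in> v"
  shows "vert V j = v"
  unfolding vert_def
proof (rule the_equality)
  show "v \<in> V \<and> j \<in> v" using assms by blast
  fix w assume "w \<in> V \<and> j \<in> w"
  then show "w = v" using assms unfolding metric_graph_def by blast
qed

lemma vert_in:
  assumes "metric_graph N x V" "j < 2*N"
  shows "vert V j \<in> V \<and> j \<in> vert V j"
proof -
  have "j \<in> \<Union>V" using assms unfolding metric_graph_def by auto
  then obtain v where "v \<in> V" "j \<in> v" by blast
  then show ?thesis using vert_eq[OF assms(1)] by metis
qed

lemma joins_iff:
  assumes "metric_graph N x V" "n < N"
  shows "joins V n u w \<longleftrightarrow> (u = Lv V n \<and> w = Rv V n) \<or> (u = Rv V n \<and> w = Lv V n)"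
proof -
  have a: "2*n < 2*N" "2*n+1 < 2*N" using assms by auto
  show ?thesis
    unfolding joins_def
    using vert_in[OF assms(1) a(1)] vert_in[OF assms(1) a(2)] vert_eq[OF assms(1)]
    by metis
qed

lemma LR_in:
  assumes "metric_graph N x V" "n < N"
  shows "Lv V n \<in> V" "Rv V n \<in> V" "2*n \<in> Lv V n" "2*n+1 \<in> Rv V n"
  using vert_in[OF assms(1), of "2*n"] vert_in[OF assms(1), of "2*n+1"] assms(2) by auto

lemma shorten_walk:
  assumes p0: "p 0 = a" and pk: "p k = b" and st: "\<forall>t<k. (p t, p (Suc t)) \<in> R"
    and ij: "i < j" "j \<le> k" "p i = p j"
  shows "(a, b) \<in> R ^^ (k - (j - i))"
proof -
  define q where "q t = (if t < i then p t else p (t + (j - i)))" for t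
  have "q 0 = a" using p0 ij unfolding q_def by auto
  moreover have "q (k - (j - i)) = b" using pk ij unfolding q_def by auto
  moreover have "\<forall>t < k - (j - i). (q t, q (Suc t)) \<in> R"
  proof (intro allI impI)
    fix t assume t: "t < k - (j - i)"
    consider "Suc t < i" | "Suc t = i" | "i \<le> t" by linarith
    then show "(q t, q (Suc t)) \<in> R"
    proof cases
      case 1 then show ?thesis using st ij t unfolding q_def by auto
    next
      case 2
      then have "q t = p t" "q (Suc t) = p (Suc t)" using ij unfolding q_def by auto
      then show ?thesis using st ij t by auto
    next
      case 3
      then have "q t = p (t + (j - i))" "q (Suc t) = p (Suc (t + (j - i)))" unfolding q_def by auto
      moreover have "t + (j - i) < k" using t ij by linarith
      ultimately show ?thesis using st by auto
    qed
  qed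
  ultimately show ?thesis unfolding relpow_fun_conv by blast
qed

lemma tree_key:
  assumes T: "metric_tree N x V" and e: "e < N"
  shows "(Rv V e, Lv V e) \<notin> (Rel V ({..<N} - {e}))\<^sup>*"
proof
  assume r: "(Rv V e, Lv V e) \<in> (Rel V ({..<N} - {e}))\<^sup>*"
  define F where "F = {..<N} - {e}"
  define RR where "RR = Rel V F"
  have G: "metric_graph N x V" using T unfolding metric_tree_def by blast
  from r obtain k where "(Rv V e, Lv V e) \<in> RR ^^ k" unfolding RR_def F_def
    using rtrancl_power by blast
  define k0 where "k0 = (LEAST k. (Rv V e, Lv V e) \<in> RR ^^ k)"
  have k0: "(Rv V e, Lv V e) \<in> RR ^^ k0" unfolding k0_def by (rule LeastI) fact
  have k0min: "\<And>k. (Rv V e, Lv V e) \<in> RR ^^ k \<Longrightarrow> k0 \<le> k" unfolding k0_def by (rule Least_le)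
  obtain p where p: "p 0 = Rv V e" "p k0 = Lv V e" "\<forall>i<k0. (p i, p (Suc i)) \<in> RR"
    using k0 unfolding relpow_fun_conv by blast
  have dist: "p i \<noteq> p j" if "i < j" "j \<le> k0" for i j
  proof
    assume "p i = p j"
    then have "(Rv V e, Lv V e) \<in> RR ^^ (k0 - (j - i))"
      using shorten_walk[OF p(1) p(2) p(3) that] by blast
    then have "k0 \<le> k0 - (j - i)" by (rule k0min)
    then show False using that by linarith
  qed
  define es where "es i = (SOME n. n \<in> F \<and> joins V n (p i) (p (Suc i)))" for i
  have es: "es i \<in> F \<and> joins V (es i) (p i) (p (Suc i))" if "i < k0" for i
  proof -
    have "\<exists>n. n \<in> F \<and> joins V n (p i) (p (Suc i))" using p(3) that unfolding RR_def Rel_def by auto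
    then show ?thesis unfolding es_def by (rule someI_ex)
  qed
  define es' where "es' i = (if i < k0 then es i else e)" for i
  define vs where "vs i = (if i \<le> k0 then p i else Rv V e)" for i
  have "has_cycle N V"
    unfolding has_cycle_def
  proof (intro exI conjI)
    show "1 \<le> Suc k0" by simp
    show "vs (Suc k0) = vs 0" unfolding vs_def using p(1) by simp
    show "\<forall>i<Suc k0. es' i < N \<and> joins V (es' i) (vs i) (vs (Suc i))"
    proof (intro allI impI)
      fix i assume i: "i < Suc k0"
      show "es' i < N \<and> joins V (es' i) (vs i) (vs (Suc i))"
      proof (cases "i < k0")
        case True
        then show ?thesis using es[OF True] unfolding es'_def vs_def F_def by auto
      next
        case False
        then have "i = k0" using i by simp
        then show ?thesis unfolding es'_def vs_def using e p(2) joins_iff[OF G e] LR_in[OF G e] by auto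
      qed
    qed
    show "inj_on es' {..<Suc k0}"
    proof (rule inj_onI)
      fix i j assume ij: "i \<in> {..<Suc k0}" "j \<in> {..<Suc k0}" "es' i = es' j"
      show "i = j"
      proof (rule ccontr)
        assume ne: "i \<noteq> j"
        {
          fix i j assume ij: "i < j" "j < Suc k0" "es' i = es' j"
          have False
          proof (cases "j < k0")
            case False
            then have "es' j = e" "es' i = es i" "i < k0" using ij unfolding es'_def by auto
            then show False using es[of i] ij unfolding F_def by auto
          next
            case True
            define n where "n = es i"
            have "es j = n" using ij True unfolding n_def es'_def by auto
            have n: "n < N" "joins V n (p i) (p (Suc i))" "joins V n (p j) (p (Suc j))"
              using es[of i] es[of j] ij True \<open>es j = n\<close> unfolding n_def F_def by auto
            have "p i = p j \<or> p i = p (Suc j)"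
              using n(2,3) joins_iff[OF G n(1)] by auto
            then show False using dist[of i j] dist[of i "Suc j"] ij True by auto
          qed
        }
        then show False using ne ij by (metis lessThan_iff nat_neq_iff)
      qed
    qed
  qed
  then show False using T unfolding metric_tree_def by blast
qed

lemma coloring:
  assumes T: "metric_tree N x V"
  shows "\<exists>y::nat set \<Rightarrow> real. (\<forall>v. y v = 1 \<or> y v = -1) \<and> (\<forall>n<N. y (Lv V n) = - y (Rv V n))"
proof -
  have G: "metric_graph N x V" using T unfolding metric_tree_def by blast
  have "finite F \<Longrightarrow> F \<subseteq> {..<N} \<Longrightarrow>
    \<exists>y::nat set \<Rightarrow> real. (\<forall>v. y v = 1 \<or> y v = -1) \<and> (\<forall>n\<in>F. y (Lv V n) = - y (Rv V n))" for F
  proof (induction F rule: finite_induct)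
    case empty
    show ?case by (rule exI[of _ "\<lambda>_. 1"]) auto
  next
    case (insert e F)
    then obtain y :: "nat set \<Rightarrow> real" where y: "\<forall>v. y v = 1 \<or> y v = -1" "\<forall>n\<in>F. y (Lv V n) = - y (Rv V n)"
      by auto
    have e: "e < N" using insert by auto
    show ?case
    proof (cases "y (Lv V e) = - y (Rv V e)")
      case True
      then show ?thesis using y by (intro exI[of _ y]) auto
    next
      case False
      define C where "C = {v. (Rv V e, v) \<in> (Rel V F)\<^sup>*}"
      define y' where "y' v = (if v \<in> C then - y v else y v)" for v
      have LC: "Lv V e \<notin> C"
      proof
        assume "Lv V e \<in> C"
        moreover have "Rel V F \<subseteq> Rel V ({..<N} - {e})" using insert unfolding Rel_def by auto
        ultimately have "(Rv V e, Lv V e) \<in> (Rel V ({..<N} - {e}))\<^sup>*"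
          unfolding C_def using rtrancl_mono by blast
        then show False using tree_key[OF T e] by blast
      qed
      have RC: "Rv V e \<in> C" unfolding C_def by simp
      have eq: "y (Lv V e) = y (Rv V e)" using False y(1)[rule_format, of "Lv V e"] y(1)[rule_format, of "Rv V e"] by auto
      have Fn: "Lv V n \<in> C \<longleftrightarrow> Rv V n \<in> C" if "n \<in> F" for n
      proof -
        have n: "n < N" using that insert by auto
        have "(Lv V n, Rv V n) \<in> Rel V F" "(Rv V n, Lv V n) \<in> Rel V F"
          unfolding Rel_def using that joins_iff[OF G n] by auto
        then show ?thesis unfolding C_def by (blast intro: rtrancl_into_rtrancl)
      qed
      show ?thesis
      proof (intro exI[of _ y'] conjI ballI allI)
        show "y' v = 1 \<or> y' v = -1" for v using y(1)[rule_format, of v] unfolding y'_def by auto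
        fix n assume "n \<in> insert e F"
        then consider "n = e" | "n \<in> F" by blast
        then show "y' (Lv V n) = - y' (Rv V n)"
        proof cases
          case 1 then show ?thesis unfolding y'_def using LC RC eq by simp
        next
          case 2 then show ?thesis unfolding y'_def using Fn[OF 2] y(2) by auto
        qed
      qed
    qed
  qed
  from this[of "{..<N}"] show ?thesis by auto
qed

lemma finite_V:
  assumes "metric_graph N x V" shows "finite V"
proof -
  have "\<Union>V = {..<2*N}" using assms unfolding metric_graph_def by blast
  then have "finite (\<Union>V)" by simp
  then show ?thesis using finite_UnionD by blast
qed

lemma finite_vertex:
  assumes "metric_graph N x V" "v \<in> V" shows "finite v"
proof -
  have "v \<subseteq> {..<2*N}" using assms unfolding metric_graph_def by blast
  then show ?thesis using finite_subset by blast
qed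

lemma sum_partition:
  assumes G: "metric_graph N x V"
  shows "(\<Sum>j<2*N. g j) = (\<Sum>v\<in>V. \<Sum>j\<in>v. g j)"
proof -
  have "\<Union>V = {..<2*N}" using G unfolding metric_graph_def by blast
  then have "(\<Sum>j<2*N. g j) = (\<Sum>j\<in>\<Union>V. g j)" by simp
  also have "\<dots> = (sum \<circ> sum) g V"
    by (rule sum.Union_disjoint) (use G finite_vertex in \<open>auto simp: metric_graph_def\<close>)
  also have "\<dots> = (\<Sum>v\<in>V. \<Sum>j\<in>v. g j)" by simp
  finally show ?thesis .
qed

lemma incidence_inj:
  assumes T: "metric_tree N x V" and c: "\<forall>v\<in>V. (\<Sum>j\<in>v. c (j div 2)) = (0::real)" and e: "e < N"
  shows "c e = 0"
proof -
  have G: "metric_graph N x V" using T unfolding metric_tree_def by blast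
  obtain y :: "nat set \<Rightarrow> real" where y: "\<forall>v. y v = 1 \<or> y v = -1" "\<forall>n<N. y (Lv V n) = - y (Rv V n)"
    using coloring[OF T] by blast
  define F where "F = {..<N} - {e}"
  define C where "C = {v\<in>V. (Rv V e, v) \<in> (Rel V F)\<^sup>*}"
  define h where "h j = y (vert V j) * c (j div 2)" for j
  define J where "J = \<Union>C"
  have CV: "C \<subseteq> V" unfolding C_def by auto
  have finC: "finite C" using finite_V[OF G] CV finite_subset by blast
  have "\<forall>v\<in>C. (\<Sum>j\<in>v. c (j div 2)) = 0" using c CV by blast
  then have "0 = (\<Sum>v\<in>C. y v * (\<Sum>j\<in>v. c (j div 2)))" by simp
  also have "\<dots> = (\<Sum>v\<in>C. \<Sum>j\<in>v. h j)"
  proof (rule sum.cong[OF refl])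
    fix v assume "v \<in> C"
    then have v: "v \<in> V" using CV by auto
    show "y v * (\<Sum>j\<in>v. c (j div 2)) = (\<Sum>j\<in>v. h j)"
      unfolding h_def sum_distrib_left using vert_eq[OF G v] by simp
  qed
  also have "\<dots> = (sum \<circ> sum) h C" by simp
  also have "\<dots> = (\<Sum>j\<in>J. h j)" unfolding J_def
  proof (rule sum.Union_disjoint[symmetric])
    show "\<forall>A\<in>C. finite A" using CV finite_vertex[OF G] by blast
    show "\<forall>A\<in>C. \<forall>B\<in>C. A \<noteq> B \<longrightarrow> A \<inter> B = {}" using CV G unfolding metric_graph_def by blast
  qed
  finally have sumJ: "(\<Sum>j\<in>J. h j) = 0" by simp
  have LC: "Lv V e \<notin> C" using tree_key[OF T e] unfolding C_def F_def by blast
  have RC: "Rv V e \<in> C" unfolding C_def using LR_in[OF G e] by simp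
  have JV: "j \<in> J \<longleftrightarrow> j < 2*N \<and> vert V j \<in> C" for j
  proof
    assume "j \<in> J"
    then obtain v where "v \<in> C" "j \<in> v" unfolding J_def by blast
    moreover then have "v \<in> V" using CV by auto
    ultimately show "j < 2*N \<and> vert V j \<in> C" using vert_eq[OF G] G unfolding metric_graph_def by blast
  next
    assume "j < 2*N \<and> vert V j \<in> C"
    then show "j \<in> J" unfolding J_def using vert_in[OF G] by blast
  qed
  have in1: "2*e+1 \<in> J" using JV RC e by auto
  have notin0: "2*e \<notin> J" using JV LC by auto
  define S where "S = J - {2*e+1}"
  define p where "p j = (if even j then j + 1 else j - 1)" for j :: nat
  have pdiv: "p j div 2 = j div 2" for j unfolding p_def by (auto elim: oddE)
  have pp: "p (p j) = j" for j unfolding p_def by (auto elim: oddE)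
  have pv: "vert V (p j) = (if even j then Rv V (j div 2) else Lv V (j div 2))" for j
    unfolding p_def by (auto elim!: evenE oddE)
  have jv: "vert V j = (if even j then Lv V (j div 2) else Rv V (j div 2))" for j
    by (auto elim!: evenE oddE)
  have Fn: "Lv V n \<in> C \<longleftrightarrow> Rv V n \<in> C" if "n < N" "n \<noteq> e" for n
  proof -
    have "n \<in> F" using that unfolding F_def by auto
    have "(Lv V n, Rv V n) \<in> Rel V F" "(Rv V n, Lv V n) \<in> Rel V F"
      unfolding Rel_def using \<open>n \<in> F\<close> joins_iff[OF G that(1)] by auto
    moreover have "Lv V n \<in> V" "Rv V n \<in> V" using LR_in[OF G that(1)] by auto
    ultimately show ?thesis unfolding C_def by (blast intro: rtrancl_into_rtrancl)
  qed
  have pS: "p j \<in> S" if "j \<in> S" for j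
  proof -
    have j: "j < 2*N" "vert V j \<in> C" "j \<noteq> 2*e+1" using that JV unfolding S_def by auto
    have n: "j div 2 < N" using j by auto
    have ne: "j div 2 \<noteq> e"
    proof
      assume "j div 2 = e"
      then have "j = 2*e \<or> j = 2*e+1" by auto
      then show False using j notin0 JV by auto
    qed
    have "p j div 2 < N" using n pdiv by simp
    then have "p j < N * 2" by (subst (asm) div_less_iff_less_mult) auto
    moreover have "vert V (p j) \<in> C"
    proof (cases "even j")
      case True
      then have "vert V (p j) = Rv V (j div 2)" "vert V j = Lv V (j div 2)" using pv[of j] jv[of j] by auto
      then show ?thesis using Fn[OF n ne] j(2) by simp
    next
      case False
      then have "vert V (p j) = Lv V (j div 2)" "vert V j = Rv V (j div 2)" using pv[of j] jv[of j] by auto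
      then show ?thesis using Fn[OF n ne] j(2) by simp
    qed
    moreover have "p j \<noteq> 2*e+1"
    proof
      assume "p j = 2*e+1"
      then have "p j div 2 = e" by simp
      then show False using pdiv ne by simp
    qed
    ultimately show ?thesis using JV unfolding S_def by (auto simp: mult.commute)
  qed
  have hp: "h (p j) = - h j" if "j \<in> S" for j
  proof -
    have "j < 2*N" using that JV unfolding S_def by auto
    then have n: "j div 2 < N" by auto
    show ?thesis
    proof (cases "even j")
      case True
      then have "vert V (p j) = Rv V (j div 2)" "vert V j = Lv V (j div 2)" using pv[of j] jv[of j] by auto
      then show ?thesis unfolding h_def pdiv using y(2) n by simp
    next
      case False
      then have "vert V (p j) = Lv V (j div 2)" "vert V j = Rv V (j div 2)" using pv[of j] jv[of j] by auto
      then show ?thesis unfolding h_def pdiv using y(2) n by simp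
    qed
  qed
  have bij: "bij_betw p S S"
    by (rule bij_betw_byWitness[where f'=p]) (use pp pS in auto)
  have "(\<Sum>j\<in>S. h j) = (\<Sum>j\<in>S. h (p j))"
    using sum.reindex_bij_betw[OF bij, of h] by simp
  also have "\<dots> = - (\<Sum>j\<in>S. h j)" using hp by (simp add: sum_negf)
  finally have S0: "(\<Sum>j\<in>S. h j) = 0" by simp
  have finJ: "finite J" using JV by (metis finite_subset subsetI finite_lessThan lessThan_iff)
  have "(\<Sum>j\<in>J. h j) = h (2*e+1) + (\<Sum>j\<in>S. h j)"
    unfolding S_def using sum.remove[OF finJ in1] by simp
  then have "h (2*e+1) = 0" using sumJ S0 by simp
  then have "y (Rv V e) * c e = 0" unfolding h_def by simp
  moreover have "y (Rv V e) \<noteq> 0" using y(1) by (metis zero_neq_neg_one zero_neq_one)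
  ultimately show ?thesis by simp
qed



definition ok :: "nat \<Rightarrow> (nat \<Rightarrow> real) \<Rightarrow> real \<Rightarrow> (nat \<Rightarrow> real \<Rightarrow> real) \<Rightarrow> bool" where
  "ok N x lam f \<longleftrightarrow> (\<forall>n t. (N \<le> n \<or> t \<notin> edge_dom x n) \<longrightarrow> f n t = 0) \<and>
     (\<forall>n<N. \<forall>t\<in>edge_dom x n.
        (f n has_vector_derivative edge_deriv x f n t) (at t within edge_dom x n) \<and>
        (edge_deriv x f n has_vector_derivative (- lam * f n t)) (at t within edge_dom x n))"

lemma eig_iff: "f \<in> eigenspace N x cond lam \<longleftrightarrow> ok N x lam f \<and> cond f"
  unfolding eigenspace_def ok_def by simp

lemma ab_less: "metric_graph N x V \<Longrightarrow> n < N \<Longrightarrow> x (2*n) < x (2*n+1)"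
  unfolding metric_graph_def by auto

lemma vd_unique:
  fixes g :: "real \<Rightarrow> real"
  assumes G: "metric_graph N x V" and n: "n < N" and t: "t \<in> edge_dom x n"
    and d: "(g has_vector_derivative d) (at t within edge_dom x n)"
  shows "vector_derivative g (at t within edge_dom x n) = d"
  using vector_derivative_within_closed_interval[OF ab_less[OF G n], of t g d] t d
  unfolding edge_dom_def by simp

lemma ed_unique:
  assumes G: "metric_graph N x V" and n: "n < N" and t: "t \<in> edge_dom x n"
    and d: "(f n has_vector_derivative d) (at t within edge_dom x n)"
  shows "edge_deriv x f n t = d"
  unfolding edge_deriv_def using vd_unique[OF G n t d] .

lemma end_in_dom:
  assumes G: "metric_graph N x V" and j: "j < 2*N"
  shows "x j \<in> edge_dom x (j div 2)" "j div 2 < N"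
proof -
  have n: "j div 2 < N" using j by auto
  have "j = 2*(j div 2) \<or> j = 2*(j div 2) + 1" by auto
  then show "x j \<in> edge_dom x (j div 2)" using ab_less[OF G n] unfolding edge_dom_def by auto
  show "j div 2 < N" by fact
qed

lemma sum_2N: fixes N :: nat and g :: "nat \<Rightarrow> 'a::comm_monoid_add"
  shows "(\<Sum>j<2*N. g j) = (\<Sum>n<N. g (2*n) + g (2*n+1))"
  by (induction N) (auto simp: sum.distrib ac_simps)

lemma energy_integral:
  assumes G: "metric_graph N x V" and f: "ok N x lam f" and n: "n < N"
  shows "((\<lambda>t. (edge_deriv x f n t)\<^sup>2 - lam * (f n t)\<^sup>2) has_integral
           (f n (x (2*n+1)) * edge_deriv x f n (x (2*n+1)) - f n (x (2*n)) * edge_deriv x f n (x (2*n))))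
         {x (2*n)..x (2*n+1)}"
proof -
  let ?f' = "edge_deriv x f n"
  have ab: "x (2*n) \<le> x (2*n+1)" using ab_less[OF G n] by simp
  show ?thesis
  proof (rule fundamental_theorem_of_calculus[OF ab])
    fix t assume t: "t \<in> {x (2*n)..x (2*n+1)}"
    then have t': "t \<in> edge_dom x n" unfolding edge_dom_def .
    have d1: "(f n has_vector_derivative ?f' t) (at t within edge_dom x n)"
      and d2: "(?f' has_vector_derivative (- lam * f n t)) (at t within edge_dom x n)"
      using f n t' unfolding ok_def by auto
    have "((\<lambda>t. f n t * ?f' t) has_vector_derivative (f n t * (- lam * f n t) + ?f' t * ?f' t))
           (at t within edge_dom x n)"
      by (rule has_vector_derivative_mult[OF d1 d2])
    moreover have "f n t * (- lam * f n t) + ?f' t * ?f' t = (?f' t)\<^sup>2 - lam * (f n t)\<^sup>2"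
      by (simp add: power2_eq_square algebra_simps)
    ultimately show "((\<lambda>t. f n t * ?f' t) has_vector_derivative ((?f' t)\<^sup>2 - lam * (f n t)\<^sup>2))
           (at t within {x (2*n)..x (2*n+1)})" unfolding edge_dom_def by simp
  qed
qed

lemma boundary_sum:
  assumes G: "metric_graph N x V"
  shows "(\<Sum>j<2*N. endval x f j * endderiv x f j) =
     - (\<Sum>n<N. f n (x (2*n+1)) * edge_deriv x f n (x (2*n+1)) - f n (x (2*n)) * edge_deriv x f n (x (2*n)))"
  unfolding sum_2N
  by (simp add: endval_def endderiv_def sum_negf[symmetric] algebra_simps)

lemma energy_zero:
  assumes G: "metric_graph N x V" and f: "ok N x lam f" and lam: "lam \<le> 0"
    and bd: "(\<Sum>j<2*N. endval x f j * endderiv x f j) = 0"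
    and n: "n < N" and t: "t \<in> edge_dom x n"
  shows "(edge_deriv x f n t)\<^sup>2 - lam * (f n t)\<^sup>2 = 0"
proof -
  define B where "B n = f n (x (2*n+1)) * edge_deriv x f n (x (2*n+1)) - f n (x (2*n)) * edge_deriv x f n (x (2*n))" for n
  define \<phi> where "\<phi> n t = (edge_deriv x f n t)\<^sup>2 - lam * (f n t)\<^sup>2" for n t
  have int: "(\<phi> m has_integral B m) {x (2*m)..x (2*m+1)}" if "m < N" for m
    unfolding \<phi>_def B_def using energy_integral[OF G f that] .
  have phinn: "0 \<le> \<phi> m s" for m s
  proof -
    have "lam * (f m s)\<^sup>2 \<le> 0" using lam by (simp add: mult_nonpos_nonneg)
    moreover have "0 \<le> (edge_deriv x f m s)\<^sup>2" by simp
    ultimately show ?thesis unfolding \<phi>_def by linarith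
  qed
  have Bnn: "0 \<le> B m" if "m < N" for m
    using has_integral_nonneg[OF int[OF that]] phinn by blast
  have "(\<Sum>m<N. B m) = 0" using boundary_sum[OF G, of f] bd unfolding B_def by simp
  moreover have "\<forall>m\<in>{..<N}. 0 \<le> B m" using Bnn by auto
  ultimately have "\<forall>m\<in>{..<N}. B m = 0" using sum_nonneg_eq_0_iff[of "{..<N}" B] by simp
  then have B0: "B n = 0" using n by simp
  have cont: "continuous_on {x (2*n)..x (2*n+1)} (\<phi> n)"
  proof -
    have c1: "continuous_on (edge_dom x n) (f n)"
      by (rule continuous_on_vector_derivative) (use f n in \<open>auto simp: ok_def\<close>)
    have c2: "continuous_on (edge_dom x n) (edge_deriv x f n)"
      by (rule continuous_on_vector_derivative) (use f n in \<open>auto simp: ok_def\<close>)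
    show ?thesis unfolding \<phi>_def using c1 c2 unfolding edge_dom_def by (intro continuous_intros)
  qed
  have "\<phi> n t = 0"
  proof (rule has_integral_0_cbox_imp_0[where f="\<phi> n" and a="x (2*n)" and b="x (2*n+1)"])
    show "continuous_on (cbox (x (2*n)) (x (2*n+1))) (\<phi> n)" using cont by simp
    show "0 \<le> \<phi> n s" for s by (rule phinn)
    show "(\<phi> n has_integral 0) (cbox (x (2*n)) (x (2*n+1)))" using int[OF n] B0 by simp
    show "box (x (2*n)) (x (2*n+1)) \<noteq> {}" using ab_less[OF G n] by simp
    show "t \<in> cbox (x (2*n)) (x (2*n+1))" using t unfolding edge_dom_def by simp
  qed
  then show ?thesis unfolding \<phi>_def .
qed

lemma vertex_ne: "metric_graph N x V \<Longrightarrow> v \<in> V \<Longrightarrow> \<exists>i. i \<in> v"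
  unfolding metric_graph_def by auto

lemma bd_std:
  assumes G: "metric_graph N x V" and c: "standard_cond x V f"
  shows "(\<Sum>j<2*N. endval x f j * endderiv x f j) = 0"
proof -
  have "(\<Sum>j<2*N. endval x f j * endderiv x f j) = (\<Sum>v\<in>V. \<Sum>j\<in>v. endval x f j * endderiv x f j)"
    by (rule sum_partition[OF G])
  also have "\<dots> = 0"
  proof (rule sum.neutral, rule ballI)
    fix v assume v: "v \<in> V"
    then obtain i where i: "i \<in> v" using vertex_ne[OF G] by blast
    have eqv: "\<forall>j\<in>v. endval x f j = endval x f i" using c v i unfolding standard_cond_def by blast
    have "(\<Sum>j\<in>v. endval x f j * endderiv x f j) = (\<Sum>j\<in>v. endval x f i * endderiv x f j)"
      by (rule sum.cong[OF refl]) (use eqv in metis)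
    also have "\<dots> = endval x f i * (\<Sum>j\<in>v. endderiv x f j)" by (simp add: sum_distrib_left)
    also have "\<dots> = 0" using c v unfolding standard_cond_def by simp
    finally show "(\<Sum>j\<in>v. endval x f j * endderiv x f j) = 0" .
  qed
  finally show ?thesis .
qed

lemma bd_as:
  assumes G: "metric_graph N x V" and c: "antistandard_cond x V f"
  shows "(\<Sum>j<2*N. endval x f j * endderiv x f j) = 0"
proof -
  have "(\<Sum>j<2*N. endval x f j * endderiv x f j) = (\<Sum>v\<in>V. \<Sum>j\<in>v. endval x f j * endderiv x f j)"
    by (rule sum_partition[OF G])
  also have "\<dots> = 0"
  proof (rule sum.neutral, rule ballI)
    fix v assume v: "v \<in> V"
    then obtain i where i: "i \<in> v" using vertex_ne[OF G] by blast
    have eqv: "\<forall>j\<in>v. endderiv x f j = endderiv x f i" using c v i unfolding antistandard_cond_def by blast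
    have "(\<Sum>j\<in>v. endval x f j * endderiv x f j) = (\<Sum>j\<in>v. endval x f j * endderiv x f i)"
      by (rule sum.cong[OF refl]) (use eqv in metis)
    also have "\<dots> = (\<Sum>j\<in>v. endval x f j) * endderiv x f i" by (simp add: sum_distrib_right)
    also have "\<dots> = 0" using c v unfolding antistandard_cond_def by simp
    finally show "(\<Sum>j\<in>v. endval x f j * endderiv x f j) = 0" .
  qed
  finally show ?thesis .
qed



lemma plus_app: "(f + g) n = (\<lambda>t. f n t + (g::nat \<Rightarrow> real \<Rightarrow> real) n t)"
  by (simp add: plus_fun_def)

lemma ok_add:
  assumes G: "metric_graph N x V" and f: "ok N x lam f" and g: "ok N x lam g"
  shows "ok N x lam (f + g)"
    "\<And>n t. n < N \<Longrightarrow> t \<in> edge_dom x n \<Longrightarrow> edge_deriv x (f + g) n t = edge_deriv x f n t + edge_deriv x g n t"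
proof -
  have d: "((f + g) n has_vector_derivative (edge_deriv x f n t + edge_deriv x g n t)) (at t within edge_dom x n)"
    if "n < N" "t \<in> edge_dom x n" for n t
    unfolding plus_app using f g that unfolding ok_def by (auto intro!: has_vector_derivative_add)
  show ed: "edge_deriv x (f + g) n t = edge_deriv x f n t + edge_deriv x g n t"
    if "n < N" "t \<in> edge_dom x n" for n t
    using ed_unique[where f="f + g", OF G that d[OF that]] .
  show "ok N x lam (f + g)"
    unfolding ok_def
  proof (intro conjI allI impI ballI)
    show "(f + g) n t = 0" if "N \<le> n \<or> t \<notin> edge_dom x n" for n t
      using f g that unfolding ok_def plus_app by auto
    fix n t assume n: "n < N" and t: "t \<in> edge_dom x n"
    show "((f + g) n has_vector_derivative edge_deriv x (f + g) n t) (at t within edge_dom x n)"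
      using d[OF n t] ed[OF n t] by simp
    have "((\<lambda>s. edge_deriv x f n s + edge_deriv x g n s) has_vector_derivative (- lam * f n t + - lam * g n t))
          (at t within edge_dom x n)"
    proof -
      have "(edge_deriv x f n has_vector_derivative (- lam * f n t)) (at t within edge_dom x n)"
           "(edge_deriv x g n has_vector_derivative (- lam * g n t)) (at t within edge_dom x n)"
        using f g n t unfolding ok_def by blast+
      then show ?thesis by (rule has_vector_derivative_add)
    qed
    then have "(edge_deriv x (f + g) n has_vector_derivative (- lam * f n t + - lam * g n t)) (at t within edge_dom x n)"
      by (rule has_vector_derivative_transform[OF t, rotated]) (use ed n in auto)
    moreover have "- lam * f n t + - lam * g n t = - lam * (f + g) n t" unfolding plus_app by (simp add: algebra_simps)
    ultimately show "(edge_deriv x (f + g) n has_vector_derivative (- lam * (f + g) n t)) (at t within edge_dom x n)"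
      by metis
  qed
qed

lemma ok_scale:
  assumes G: "metric_graph N x V" and f: "ok N x lam f"
  shows "ok N x lam (fscale c f)"
    "\<And>n t. n < N \<Longrightarrow> t \<in> edge_dom x n \<Longrightarrow> edge_deriv x (fscale c f) n t = c * edge_deriv x f n t"
proof -
  have d: "(fscale c f n has_vector_derivative (c * edge_deriv x f n t)) (at t within edge_dom x n)"
    if "n < N" "t \<in> edge_dom x n" for n t
    unfolding fscale_def using f that unfolding ok_def by (auto intro!: has_vector_derivative_mult_right)
  show ed: "edge_deriv x (fscale c f) n t = c * edge_deriv x f n t"
    if "n < N" "t \<in> edge_dom x n" for n t
    using ed_unique[where f="fscale c f", OF G that d[OF that]] .
  show "ok N x lam (fscale c f)"
    unfolding ok_def
  proof (intro conjI allI impI ballI)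
    show "fscale c f n t = 0" if "N \<le> n \<or> t \<notin> edge_dom x n" for n t
      using f that unfolding ok_def fscale_def by auto
    fix n t assume n: "n < N" and t: "t \<in> edge_dom x n"
    show "(fscale c f n has_vector_derivative edge_deriv x (fscale c f) n t) (at t within edge_dom x n)"
      using d[OF n t] ed[OF n t] by simp
    have "((\<lambda>s. c * edge_deriv x f n s) has_vector_derivative (c * (- lam * f n t)))
          (at t within edge_dom x n)"
    proof -
      have "(edge_deriv x f n has_vector_derivative (- lam * f n t)) (at t within edge_dom x n)"
        using f n t unfolding ok_def by blast
      then show ?thesis by (rule has_vector_derivative_mult_right)
    qed
    then have "(edge_deriv x (fscale c f) n has_vector_derivative (c * (- lam * f n t))) (at t within edge_dom x n)"
      by (rule has_vector_derivative_transform[OF t, rotated]) (use ed n in auto)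
    moreover have "c * (- lam * f n t) = - lam * fscale c f n t" unfolding fscale_def by (simp add: algebra_simps)
    ultimately show "(edge_deriv x (fscale c f) n has_vector_derivative (- lam * fscale c f n t)) (at t within edge_dom x n)"
      by metis
  qed
qed

lemma ok_zero:
  assumes G: "metric_graph N x V"
  shows "ok N x lam 0"
proof -
  have z: "(0::nat \<Rightarrow> real \<Rightarrow> real) n = (\<lambda>t. 0)" for n by (simp add: zero_fun_def)
  have d: "((0::nat \<Rightarrow> real \<Rightarrow> real) n has_vector_derivative 0) (at t within edge_dom x n)" for n t
    unfolding z by simp
  have ed: "edge_deriv x 0 n t = 0" if "n < N" "t \<in> edge_dom x n" for n t
    using ed_unique[where f=0, OF G that d] .
  show ?thesis
    unfolding ok_def
  proof (intro conjI allI impI ballI)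
    show "(0::nat \<Rightarrow> real \<Rightarrow> real) n t = 0" for n t by simp
    fix n t assume n: "n < N" and t: "t \<in> edge_dom x n"
    show "((0::nat \<Rightarrow> real \<Rightarrow> real) n has_vector_derivative edge_deriv x 0 n t) (at t within edge_dom x n)"
      using d ed[OF n t] by simp
    have "((\<lambda>s. 0::real) has_vector_derivative 0) (at t within edge_dom x n)" by simp
    then have "(edge_deriv x 0 n has_vector_derivative 0) (at t within edge_dom x n)"
      by (rule has_vector_derivative_transform[OF t, rotated]) (use ed n in auto)
    then show "(edge_deriv x 0 n has_vector_derivative (- lam * (0::nat \<Rightarrow> real \<Rightarrow> real) n t)) (at t within edge_dom x n)"
      by simp
  qed
qed



lemma vertex_sub: "metric_graph N x V \<Longrightarrow> v \<in> V \<Longrightarrow> j \<in> v \<Longrightarrow> j < 2*N"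
  unfolding metric_graph_def by auto

lemma endval_add: "endval x (f + g) j = endval x f j + endval x g j"
  unfolding endval_def plus_app by simp

lemma endval_scale: "endval x (fscale c f) j = c * endval x f j"
  unfolding endval_def fscale_def by simp

lemma endderiv_add:
  assumes G: "metric_graph N x V" and f: "ok N x lam f" and g: "ok N x lam g" and j: "j < 2*N"
  shows "endderiv x (f + g) j = endderiv x f j + endderiv x g j"
  using ok_add(2)[OF G f g end_in_dom(2)[OF G j] end_in_dom(1)[OF G j]]
  unfolding endderiv_def by simp

lemma endderiv_scale:
  assumes G: "metric_graph N x V" and f: "ok N x lam f" and j: "j < 2*N"
  shows "endderiv x (fscale c f) j = c * endderiv x f j"
  using ok_scale(2)[OF G f end_in_dom(2)[OF G j] end_in_dom(1)[OF G j]]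
  unfolding endderiv_def by simp

lemma endval_zero: "endval x 0 j = 0"
  unfolding endval_def by simp

lemma endderiv_zero:
  assumes G: "metric_graph N x V" and j: "j < 2*N"
  shows "endderiv x 0 j = 0"
proof -
  have "((0::nat \<Rightarrow> real \<Rightarrow> real) (j div 2) has_vector_derivative 0) (at t within edge_dom x (j div 2))" for t
    by (simp add: zero_fun_def)
  then have "edge_deriv x 0 (j div 2) (x j) = 0"
    using ed_unique[where f=0, OF G end_in_dom(2)[OF G j] end_in_dom(1)[OF G j]] by blast
  then show ?thesis unfolding endderiv_def by simp
qed

lemma subspace_std:
  assumes G: "metric_graph N x V"
  shows "FS.subspace (eigenspace N x (standard_cond x V) lam)"
proof (rule FS.subspaceI)
  show "0 \<in> eigenspace N x (standard_cond x V) lam"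
    unfolding eig_iff standard_cond_def using ok_zero[OF G] endval_zero endderiv_zero[OF G] vertex_sub[OF G]
    by simp
next
  fix f g assume f: "f \<in> eigenspace N x (standard_cond x V) lam" and g: "g \<in> eigenspace N x (standard_cond x V) lam"
  have fo: "ok N x lam f" "standard_cond x V f" and go: "ok N x lam g" "standard_cond x V g" using f g eig_iff by auto
  have "standard_cond x V (f + g)"
    unfolding standard_cond_def
  proof (intro ballI conjI)
    fix v assume v: "v \<in> V"
    show "endval x (f + g) i = endval x (f + g) j" if "i \<in> v" "j \<in> v" for i j
      unfolding endval_add using fo(2) go(2) v that unfolding standard_cond_def by metis
    have "(\<Sum>j\<in>v. endderiv x (f + g) j) = (\<Sum>j\<in>v. endderiv x f j + endderiv x g j)"
      by (rule sum.cong[OF refl]) (use endderiv_add[OF G fo(1) go(1)] vertex_sub[OF G v] in blast)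
    also have "\<dots> = 0" using fo(2) go(2) v unfolding standard_cond_def sum.distrib by simp
    finally show "(\<Sum>j\<in>v. endderiv x (f + g) j) = 0" .
  qed
  then show "f + g \<in> eigenspace N x (standard_cond x V) lam"
    unfolding eig_iff using ok_add(1)[OF G fo(1) go(1)] by blast
next
  fix c f assume f: "f \<in> eigenspace N x (standard_cond x V) lam"
  have fo: "ok N x lam f" "standard_cond x V f" using f eig_iff by auto
  have "standard_cond x V (fscale c f)"
    unfolding standard_cond_def
  proof (intro ballI conjI)
    fix v assume v: "v \<in> V"
    show "endval x (fscale c f) i = endval x (fscale c f) j" if "i \<in> v" "j \<in> v" for i j
      unfolding endval_scale using fo(2) v that unfolding standard_cond_def by metis
    have "(\<Sum>j\<in>v. endderiv x (fscale c f) j) = (\<Sum>j\<in>v. c * endderiv x f j)"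
      by (rule sum.cong[OF refl]) (use endderiv_scale[OF G fo(1)] vertex_sub[OF G v] in blast)
    also have "\<dots> = 0" using fo(2) v unfolding standard_cond_def sum_distrib_left[symmetric] by simp
    finally show "(\<Sum>j\<in>v. endderiv x (fscale c f) j) = 0" .
  qed
  then show "fscale c f \<in> eigenspace N x (standard_cond x V) lam"
    unfolding eig_iff using ok_scale(1)[OF G fo(1)] by blast
qed

lemma dim_trivial:
  assumes "E \<subseteq> {0}" shows "FS.dim E = 0"
proof -
  have "FS.span E \<subseteq> {0}" using assms FS.span_minimal FS.subspace_single_0 by blast
  then have "FS.span {} = FS.span E" unfolding FS.span_empty using FS.span_zero[of E] by blast
  from FS.dim_eq_card[OF this FS.independent_empty] show ?thesis by simp
qed

lemma dim_one:
  assumes u: "u \<noteq> 0" "u \<in> E" and E: "\<And>f. f \<in> E \<Longrightarrow> \<exists>c. f = fscale c u"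
  shows "FS.dim E = 1"
proof -
  have "E \<subseteq> FS.span {u}" unfolding FS.span_singleton using E by blast
  then have "FS.span E \<subseteq> FS.span {u}" using FS.span_minimal FS.subspace_span by blast
  moreover have "FS.span {u} \<subseteq> FS.span E" using u(2) FS.span_mono by blast
  ultimately have "FS.span {u} = FS.span E" by blast
  moreover have "FS.independent {u}" using u(1) FS.independent_insert by simp
  ultimately show ?thesis using FS.dim_eq_card[of "{u}" E] by simp
qed



lemma neg_zero:
  assumes G: "metric_graph N x V" and f: "ok N x lam f" and lam: "lam < 0"
    and bd: "(\<Sum>j<2*N. endval x f j * endderiv x f j) = 0"
  shows "f = 0"
proof (rule ext, rule ext)
  fix n t
  show "f n t = 0 n t"
  proof (cases "n < N \<and> t \<in> edge_dom x n")
    case True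
    have e: "(edge_deriv x f n t)\<^sup>2 - lam * (f n t)\<^sup>2 = 0"
      using energy_zero[OF G f _ bd] lam True by auto
    have "0 \<le> (edge_deriv x f n t)\<^sup>2" by simp
    moreover have "0 \<le> - lam * (f n t)\<^sup>2" using lam by (intro mult_nonneg_nonneg) auto
    ultimately have "- lam * (f n t)\<^sup>2 = 0" using e by linarith
    then have "(f n t)\<^sup>2 = 0" using lam by (simp add: mult_eq_0_iff)
    then show ?thesis by simp
  next
    case False
    then show ?thesis using f unfolding ok_def by auto
  qed
qed

lemma zero_const:
  assumes G: "metric_graph N x V" and f: "ok N x 0 f"
    and bd: "(\<Sum>j<2*N. endval x f j * endderiv x f j) = 0"
    and n: "n < N" and t: "t \<in> edge_dom x n"
  shows "f n t = f n (x (2*n))"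
proof -
  have d0: "(f n has_field_derivative 0) (at s within edge_dom x n)" if s: "s \<in> edge_dom x n" for s
  proof -
    have "(edge_deriv x f n s)\<^sup>2 - 0 * (f n s)\<^sup>2 = 0" using energy_zero[OF G f _ bd n s] by simp
    then have "edge_deriv x f n s = 0" by simp
    moreover have "(f n has_vector_derivative edge_deriv x f n s) (at s within edge_dom x n)"
      using f n s unfolding ok_def by blast
    ultimately show ?thesis using has_real_derivative_iff_has_vector_derivative by metis
  qed
  obtain c where c: "\<forall>s\<in>edge_dom x n. f n s = c"
    using has_field_derivative_zero_constant[of "edge_dom x n" "f n"] d0
    unfolding edge_dom_def by auto
  have "x (2*n) \<in> edge_dom x n" using ab_less[OF G n] unfolding edge_dom_def by simp
  then show ?thesis using c t by simp
qed

lemma conn_const: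
  assumes T: "metric_tree N x V" and H: "\<forall>v\<in>V. \<forall>i\<in>v. \<forall>j\<in>v. c (i div 2) = (c (j div 2) :: real)"
    and n: "n < N"
  shows "c n = c 0"
proof -
  have G: "metric_graph N x V" using T unfolding metric_tree_def by blast
  have C: "graph_connected N V" using T unfolding metric_tree_def by blast
  have n0: "0 < N" using n by simp
  define a where "a = Lv V 0"
  have aV: "a \<in> V" "0 \<in> a" using LR_in[OF G n0] unfolding a_def by auto
  have main: "\<forall>i\<in>a. \<forall>j\<in>b. c (i div 2) = c (j div 2)"
    if "(a, b) \<in> {(a, b). \<exists>m<N. joins V m a b}\<^sup>*" for b
    using that
  proof (induction rule: rtrancl_induct)
    case base
    then show ?case using H aV by blast
  next
    case (step b d)
    then obtain m where m: "m < N" "joins V m b d" by blast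
    have bd: "b \<in> V" "d \<in> V" using m(2) unfolding joins_def by auto
    have cases: "(2*m \<in> b \<and> 2*m+1 \<in> d) \<or> (2*m \<in> d \<and> 2*m+1 \<in> b)" using m(2) unfolding joins_def by auto
    have dm: "(2*m) div 2 = m" "(2*m+1) div 2 = m" by simp_all
    obtain kb kd where k: "kb \<in> b" "kb div 2 = m" "kd \<in> d" "kd div 2 = m"
      using cases dm by blast
    show ?case
    proof (intro ballI)
      fix i j assume ij: "i \<in> a" "j \<in> d"
      have "c (i div 2) = c (kb div 2)" using step.IH ij k by blast
      also have "\<dots> = c (kd div 2)" using k by simp
      also have "\<dots> = c (j div 2)" using H bd k ij by blast
      finally show "c (i div 2) = c (j div 2)" .
    qed
  qed
  have "(a, Lv V n) \<in> {(a, b). \<exists>m<N. joins V m a b}\<^sup>*"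
    using C aV LR_in[OF G n] unfolding graph_connected_def by blast
  then have "c (0 div 2) = c ((2*n) div 2)" using main aV LR_in[OF G n] by blast
  then show ?thesis by simp
qed



lemma dim_neg:
  assumes G: "metric_graph N x V" and lam: "lam < 0"
  shows "FS.dim (eigenspace N x (standard_cond x V) lam) = 0"
    "FS.dim (eigenspace N x (antistandard_cond x V) lam) = 0"
proof -
  show "FS.dim (eigenspace N x (standard_cond x V) lam) = 0"
  proof (rule dim_trivial, rule subsetI)
    fix f assume "f \<in> eigenspace N x (standard_cond x V) lam"
    then have "ok N x lam f" "standard_cond x V f" using eig_iff by auto
    then show "f \<in> {0}" using neg_zero[OF G _ lam bd_std[OF G]] by blast
  qed
  show "FS.dim (eigenspace N x (antistandard_cond x V) lam) = 0"
  proof (rule dim_trivial, rule subsetI)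
    fix f assume "f \<in> eigenspace N x (antistandard_cond x V) lam"
    then have "ok N x lam f" "antistandard_cond x V f" using eig_iff by auto
    then show "f \<in> {0}" using neg_zero[OF G _ lam bd_as[OF G]] by blast
  qed
qed

definition unit_fun :: "nat \<Rightarrow> (nat \<Rightarrow> real) \<Rightarrow> nat \<Rightarrow> real \<Rightarrow> real" where
  "unit_fun N x = (\<lambda>n t. if n < N \<and> t \<in> edge_dom x n then 1 else 0)"

lemma unit_in:
  assumes G: "metric_graph N x V"
  shows "unit_fun N x \<in> eigenspace N x (standard_cond x V) 0"
proof -
  let ?u = "unit_fun N x"
  have d: "(?u n has_vector_derivative 0) (at t within edge_dom x n)" if "n < N" "t \<in> edge_dom x n" for n t
  proof -
    have "((\<lambda>s. 1::real) has_vector_derivative 0) (at t within edge_dom x n)" by simp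
    then show ?thesis
      by (rule has_vector_derivative_transform[OF that(2), rotated]) (use that in \<open>simp add: unit_fun_def\<close>)
  qed
  have ed: "edge_deriv x ?u n t = 0" if "n < N" "t \<in> edge_dom x n" for n t
    using ed_unique[where f="?u", OF G that d[OF that]] .
  have ok: "ok N x 0 ?u"
    unfolding ok_def
  proof (intro conjI allI impI ballI)
    show "?u n t = 0" if "N \<le> n \<or> t \<notin> edge_dom x n" for n t using that unfolding unit_fun_def by auto
    fix n t assume n: "n < N" and t: "t \<in> edge_dom x n"
    show "(?u n has_vector_derivative edge_deriv x ?u n t) (at t within edge_dom x n)"
      using d[OF n t] ed[OF n t] by simp
    have "((\<lambda>s. 0::real) has_vector_derivative 0) (at t within edge_dom x n)" by simp
    then have "(edge_deriv x ?u n has_vector_derivative 0) (at t within edge_dom x n)"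
      by (rule has_vector_derivative_transform[OF t, rotated]) (use ed n in auto)
    then show "(edge_deriv x ?u n has_vector_derivative (- 0 * ?u n t)) (at t within edge_dom x n)"
      by simp
  qed
  have ev: "endval x ?u j = 1" if "j < 2*N" for j
    using end_in_dom[OF G that] unfolding endval_def unit_fun_def by simp
  have edv: "endderiv x ?u j = 0" if "j < 2*N" for j
    using ed[OF end_in_dom(2)[OF G that] end_in_dom(1)[OF G that]] unfolding endderiv_def by simp
  have "standard_cond x V ?u"
    unfolding standard_cond_def using ev edv vertex_sub[OF G] by simp
  then show ?thesis using ok eig_iff by blast
qed

lemma dim_st0:
  assumes T: "metric_tree N x V" and N: "0 < N"
  shows "FS.dim (eigenspace N x (standard_cond x V) 0) = 1"
proof (rule dim_one)
  have G: "metric_graph N x V" using T unfolding metric_tree_def by blast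
  show "unit_fun N x \<in> eigenspace N x (standard_cond x V) 0" by (rule unit_in[OF G])
  have "x 0 \<in> edge_dom x 0" using ab_less[OF G N] unfolding edge_dom_def by simp
  then have "unit_fun N x 0 (x 0) = 1" unfolding unit_fun_def using N by simp
  then show "unit_fun N x \<noteq> 0" by (auto simp: zero_fun_def)
  fix f assume "f \<in> eigenspace N x (standard_cond x V) 0"
  then have f: "ok N x 0 f" "standard_cond x V f" using eig_iff by auto
  define c where "c n = f n (x (2*n))" for n
  have fc: "f n t = c n" if "n < N" "t \<in> edge_dom x n" for n t
    unfolding c_def using zero_const[OF G f(1) bd_std[OF G f(2)] that] .
  have evc: "endval x f j = c (j div 2)" if "j < 2*N" for j
    unfolding endval_def using fc end_in_dom[OF G that] by simp
  have H: "\<forall>v\<in>V. \<forall>i\<in>v. \<forall>j\<in>v. c (i div 2) = c (j div 2)"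
  proof (intro ballI)
    fix v i j assume vij: "v \<in> V" "i \<in> v" "j \<in> v"
    have "endval x f i = endval x f j" using f(2) vij unfolding standard_cond_def by blast
    moreover have "i < 2*N" "j < 2*N" using vertex_sub[OF G] vij by blast+
    ultimately show "c (i div 2) = c (j div 2)" using evc[of i] evc[of j] by argo
  qed
  have "f = fscale (c 0) (unit_fun N x)"
  proof (rule ext, rule ext)
    fix n t
    show "f n t = fscale (c 0) (unit_fun N x) n t"
    proof (cases "n < N \<and> t \<in> edge_dom x n")
      case True
      then have "f n t = c 0" using fc conn_const[OF T H, of n] by simp
      then show ?thesis using True unfolding fscale_def unit_fun_def by simp
    next
      case False
      then show ?thesis using f(1) unfolding ok_def fscale_def unit_fun_def by auto
    qed
  qed
  then show "\<exists>c. f = fscale c (unit_fun N x)" by blast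
qed

lemma dim_as0:
  assumes T: "metric_tree N x V"
  shows "FS.dim (eigenspace N x (antistandard_cond x V) 0) = 0"
proof (rule dim_trivial, rule subsetI)
  have G: "metric_graph N x V" using T unfolding metric_tree_def by blast
  fix f assume "f \<in> eigenspace N x (antistandard_cond x V) 0"
  then have f: "ok N x 0 f" "antistandard_cond x V f" using eig_iff by auto
  define c where "c n = f n (x (2*n))" for n
  have fc: "f n t = c n" if "n < N" "t \<in> edge_dom x n" for n t
    unfolding c_def using zero_const[OF G f(1) bd_as[OF G f(2)] that] .
  have evc: "endval x f j = c (j div 2)" if "j < 2*N" for j
    unfolding endval_def using fc end_in_dom[OF G that] by simp
  have H: "\<forall>v\<in>V. (\<Sum>j\<in>v. c (j div 2)) = 0"
  proof
    fix v assume v: "v \<in> V"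
    have "(\<Sum>j\<in>v. c (j div 2)) = (\<Sum>j\<in>v. endval x f j)"
      by (rule sum.cong[OF refl]) (use evc vertex_sub[OF G v] in metis)
    also have "\<dots> = 0" using f(2) v unfolding antistandard_cond_def by blast
    finally show "(\<Sum>j\<in>v. c (j div 2)) = 0" .
  qed
  have "f = 0"
  proof (rule ext, rule ext)
    fix n t
    show "f n t = 0 n t"
    proof (cases "n < N \<and> t \<in> edge_dom x n")
      case True
      then show ?thesis using fc incidence_inj[OF T H] by simp
    next
      case False
      then show ?thesis using f(1) unfolding ok_def by auto
    qed
  qed
  then show "f \<in> {0}" by simp
qed



definition Dmap :: "nat \<Rightarrow> (nat \<Rightarrow> real) \<Rightarrow> (nat \<Rightarrow> real) \<Rightarrow> (nat \<Rightarrow> real \<Rightarrow> real) \<Rightarrow> (nat \<Rightarrow> real \<Rightarrow> real)" where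
  "Dmap N x \<alpha> f = (\<lambda>n t. if n < N \<and> t \<in> edge_dom x n then \<alpha> n * edge_deriv x f n t else 0)"

lemma Dmap_ok:
  assumes G: "metric_graph N x V" and f: "ok N x lam f"
  shows "ok N x lam (Dmap N x \<alpha> f)"
    "\<And>n t. n < N \<Longrightarrow> t \<in> edge_dom x n \<Longrightarrow> edge_deriv x (Dmap N x \<alpha> f) n t = \<alpha> n * (- lam * f n t)"
proof -
  let ?h = "Dmap N x \<alpha> f"
  have d: "(?h n has_vector_derivative (\<alpha> n * (- lam * f n t))) (at t within edge_dom x n)"
    if "n < N" "t \<in> edge_dom x n" for n t
  proof -
    have "(edge_deriv x f n has_vector_derivative (- lam * f n t)) (at t within edge_dom x n)"
      using f that unfolding ok_def by blast
    then have "((\<lambda>s. \<alpha> n * edge_deriv x f n s) has_vector_derivative (\<alpha> n * (- lam * f n t))) (at t within edge_dom x n)"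
      by (rule has_vector_derivative_mult_right)
    then show ?thesis
      by (rule has_vector_derivative_transform[OF that(2), rotated]) (use that in \<open>simp add: Dmap_def\<close>)
  qed
  show ed: "edge_deriv x ?h n t = \<alpha> n * (- lam * f n t)" if "n < N" "t \<in> edge_dom x n" for n t
    using ed_unique[where f="?h", OF G that d[OF that]] .
  show "ok N x lam ?h"
    unfolding ok_def
  proof (intro conjI allI impI ballI)
    show "?h n t = 0" if "N \<le> n \<or> t \<notin> edge_dom x n" for n t using that unfolding Dmap_def by auto
    fix n t assume n: "n < N" and t: "t \<in> edge_dom x n"
    show "(?h n has_vector_derivative edge_deriv x ?h n t) (at t within edge_dom x n)"
      using d[OF n t] ed[OF n t] by simp
    have "(f n has_vector_derivative edge_deriv x f n t) (at t within edge_dom x n)"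
      using f n t unfolding ok_def by blast
    then have "((\<lambda>s. \<alpha> n * (- lam * f n s)) has_vector_derivative (\<alpha> n * (- lam * edge_deriv x f n t))) (at t within edge_dom x n)"
      by (intro has_vector_derivative_mult_right)
    then have "(edge_deriv x ?h n has_vector_derivative (\<alpha> n * (- lam * edge_deriv x f n t))) (at t within edge_dom x n)"
      by (rule has_vector_derivative_transform[OF t, rotated]) (use ed n in auto)
    moreover have "\<alpha> n * (- lam * edge_deriv x f n t) = - lam * ?h n t"
      using n t unfolding Dmap_def by simp
    ultimately show "(edge_deriv x ?h n has_vector_derivative (- lam * ?h n t)) (at t within edge_dom x n)"
      by metis
  qed
qed

definition sg :: "nat \<Rightarrow> real" where "sg j = (if even j then 1 else -1)"

lemma sg_sq: "sg j * sg j = 1" unfolding sg_def by simp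

lemma endderiv_sg: "endderiv x h j = sg j * edge_deriv x h (j div 2) (x j)"
  unfolding endderiv_def sg_def by simp

lemma ed_sg: "edge_deriv x h (j div 2) (x j) = sg j * endderiv x h j"
  unfolding endderiv_def sg_def by simp

lemma Dmap_endval:
  assumes G: "metric_graph N x V" and j: "j < 2*N"
  shows "endval x (Dmap N x \<alpha> f) j = \<alpha> (j div 2) * sg j * endderiv x f j"
  using end_in_dom[OF G j] unfolding endval_def Dmap_def ed_sg by simp

lemma Dmap_endderiv:
  assumes G: "metric_graph N x V" and f: "ok N x lam f" and j: "j < 2*N"
  shows "endderiv x (Dmap N x \<alpha> f) j = sg j * \<alpha> (j div 2) * (- lam * endval x f j)"
  unfolding endderiv_sg using Dmap_ok(2)[OF G f end_in_dom(2)[OF G j] end_in_dom(1)[OF G j]]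
  unfolding endval_def by simp

lemma vert_sg:
  assumes G: "metric_graph N x V" and j: "j < 2*N"
    and y: "\<forall>n<N. y (Lv V n) = - y (Rv V n)"
  shows "y (vert V j) = y (Lv V (j div 2)) * sg j"
proof (cases "even j")
  case True
  then have "j = 2 * (j div 2)" by simp
  then show ?thesis using True unfolding sg_def by (metis mult_1_right)
next
  case False
  then have jj: "j = 2 * (j div 2) + 1" by simp
  have "j div 2 < N" using j by simp
  then have "y (Rv V (j div 2)) = - y (Lv V (j div 2))" using y by simp
  then show ?thesis using False jj unfolding sg_def by (metis mult_minus1_right)
qed



lemma iso_dims:
  assumes T: "metric_tree N x V" and lam: "lam \<noteq> 0"
  shows "FS.dim (eigenspace N x (antistandard_cond x V) lam) = FS.dim (eigenspace N x (standard_cond x V) lam)"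
proof -
  have G: "metric_graph N x V" using T unfolding metric_tree_def by blast
  obtain y :: "nat set \<Rightarrow> real" where y: "\<forall>v. y v = 1 \<or> y v = -1" "\<forall>n<N. y (Lv V n) = - y (Rv V n)"
    using coloring[OF T] by blast
  define \<sigma> where "\<sigma> n = y (Lv V n)" for n
  have ss: "\<sigma> n * \<sigma> n = 1" for n using y(1)[rule_format, of "Lv V n"] unfolding \<sigma>_def by auto
  have yv: "y v = \<sigma> (j div 2) * sg j" if "v \<in> V" "j \<in> v" for v j
  proof -
    have "j < 2*N" using vertex_sub[OF G that] .
    then have "y (vert V j) = \<sigma> (j div 2) * sg j" using vert_sg[OF G _ y(2)] unfolding \<sigma>_def by blast
    then show ?thesis using vert_eq[OF G that] by simp
  qed
  define D where "D = Dmap N x \<sigma>"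
  define D' where "D' = Dmap N x (\<lambda>n. - (\<sigma> n / lam))"
  let ?Es = "eigenspace N x (standard_cond x V) lam"
  let ?Ea = "eigenspace N x (antistandard_cond x V) lam"
  show ?thesis
  proof (rule dim_transfer[OF subspace_std[OF G], where D=D and D'=D'])
    fix f assume "f \<in> ?Es"
    then have f: "ok N x lam f" "standard_cond x V f" using eig_iff by auto
    have "antistandard_cond x V (D f)"
      unfolding antistandard_cond_def
    proof (intro ballI conjI)
      fix v assume v: "v \<in> V"
      have "(\<Sum>j\<in>v. endval x (D f) j) = (\<Sum>j\<in>v. y v * endderiv x f j)"
      proof (rule sum.cong[OF refl])
        fix j assume j: "j \<in> v"
        show "endval x (D f) j = y v * endderiv x f j"
          unfolding D_def using Dmap_endval[OF G vertex_sub[OF G v j]] yv[OF v j] by simp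
      qed
      also have "\<dots> = y v * (\<Sum>j\<in>v. endderiv x f j)" by (simp add: sum_distrib_left)
      also have "\<dots> = 0" using f(2) v unfolding standard_cond_def by simp
      finally show "(\<Sum>j\<in>v. endval x (D f) j) = 0" .
      have edv: "endderiv x (D f) i = y v * (- lam * endval x f i)" if "i \<in> v" for i
        unfolding D_def using Dmap_endderiv[OF G f(1) vertex_sub[OF G v that]] yv[OF v that]
        by (simp add: algebra_simps)
      show "endderiv x (D f) i = endderiv x (D f) j" if "i \<in> v" "j \<in> v" for i j
      proof -
        have "endval x f i = endval x f j" using f(2) v that unfolding standard_cond_def by blast
        then show ?thesis using edv[OF that(1)] edv[OF that(2)] by simp
      qed
    qed
    then show "D f \<in> ?Ea" using eig_iff Dmap_ok(1)[OF G f(1)] unfolding D_def by blast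
  next
    fix g assume "g \<in> ?Ea"
    then have g: "ok N x lam g" "antistandard_cond x V g" using eig_iff by auto
    have "standard_cond x V (D' g)"
      unfolding standard_cond_def
    proof (intro ballI conjI)
      fix v assume v: "v \<in> V"
      have evv: "endval x (D' g) i = - (y v / lam) * endderiv x g i" if "i \<in> v" for i
        unfolding D'_def using Dmap_endval[OF G vertex_sub[OF G v that]] yv[OF v that]
        by (simp add: algebra_simps)
      show "endval x (D' g) i = endval x (D' g) j" if "i \<in> v" "j \<in> v" for i j
      proof -
        have "endderiv x g i = endderiv x g j" using g(2) v that unfolding antistandard_cond_def by blast
        then show ?thesis using evv[OF that(1)] evv[OF that(2)] by simp
      qed
      have "(\<Sum>j\<in>v. endderiv x (D' g) j) = (\<Sum>j\<in>v. y v * endval x g j)"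
      proof (rule sum.cong[OF refl])
        fix j assume j: "j \<in> v"
        show "endderiv x (D' g) j = y v * endval x g j"
          unfolding D'_def using Dmap_endderiv[OF G g(1) vertex_sub[OF G v j]] yv[OF v j] lam
          by (simp add: field_simps)
      qed
      also have "\<dots> = y v * (\<Sum>j\<in>v. endval x g j)" by (simp add: sum_distrib_left)
      also have "\<dots> = 0" using g(2) v unfolding antistandard_cond_def by simp
      finally show "(\<Sum>j\<in>v. endderiv x (D' g) j) = 0" .
    qed
    then show "D' g \<in> ?Es" using eig_iff Dmap_ok(1)[OF G g(1)] unfolding D'_def by blast
  next
    fix f assume "f \<in> ?Es"
    then have f: "ok N x lam f" using eig_iff by auto
    show "D' (D f) = f"
    proof (rule ext, rule ext)
      fix n t
      show "D' (D f) n t = f n t"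
      proof (cases "n < N \<and> t \<in> edge_dom x n")
        case True
        then have "edge_deriv x (D f) n t = \<sigma> n * (- lam * f n t)"
          unfolding D_def using Dmap_ok(2)[OF G f] by blast
        then have "D' (D f) n t = - (\<sigma> n / lam) * (\<sigma> n * (- lam * f n t))"
          unfolding D'_def Dmap_def using True by simp
        also have "\<dots> = (\<sigma> n * \<sigma> n) * f n t" using lam by (simp add: field_simps)
        finally show ?thesis using ss by simp
      next
        case False
        then show ?thesis using f unfolding ok_def D'_def Dmap_def by auto
      qed
    qed
  next
    fix g assume "g \<in> ?Ea"
    then have g: "ok N x lam g" using eig_iff by auto
    show "D (D' g) = g"
    proof (rule ext, rule ext)
      fix n t
      show "D (D' g) n t = g n t"
      proof (cases "n < N \<and> t \<in> edge_dom x n")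
        case True
        then have "edge_deriv x (D' g) n t = - (\<sigma> n / lam) * (- lam * g n t)"
          unfolding D'_def using Dmap_ok(2)[OF G g] by blast
        then have "D (D' g) n t = \<sigma> n * (- (\<sigma> n / lam) * (- lam * g n t))"
          unfolding D_def Dmap_def using True by simp
        also have "\<dots> = (\<sigma> n * \<sigma> n) * g n t" using lam by (simp add: field_simps)
        finally show ?thesis using ss by simp
      next
        case False
        then show ?thesis using g unfolding ok_def D_def Dmap_def by auto
      qed
    qed
  next
    fix f g assume "f \<in> ?Es" "g \<in> ?Es"
    then have f: "ok N x lam f" and g: "ok N x lam g" using eig_iff by auto
    show "D (f + g) = D f + D g"
    proof (rule ext, rule ext)
      fix n t
      show "D (f + g) n t = (D f + D g) n t"
      proof (cases "n < N \<and> t \<in> edge_dom x n")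
        case True
        have "D (f + g) n t = \<sigma> n * edge_deriv x (f + g) n t" unfolding D_def Dmap_def using True by simp
        also have "\<dots> = \<sigma> n * (edge_deriv x f n t + edge_deriv x g n t)" using ok_add(2)[OF G f g, of n t] True by simp
        also have "\<dots> = (D f + D g) n t" unfolding D_def Dmap_def plus_app using True by (simp add: algebra_simps)
        finally show ?thesis .
      next
        case False
        then have "D (f + g) n t = 0" "D f n t = 0" "D g n t = 0" unfolding D_def Dmap_def by auto
        then show ?thesis unfolding plus_app by simp
      qed
    qed
  next
    fix f c assume "f \<in> ?Es"
    then have f: "ok N x lam f" using eig_iff by auto
    show "D (fscale c f) = fscale c (D f)"
    proof (rule ext, rule ext)
      fix n t
      show "D (fscale c f) n t = fscale c (D f) n t"
      proof (cases "n < N \<and> t \<in> edge_dom x n")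
        case True
        have "D (fscale c f) n t = \<sigma> n * edge_deriv x (fscale c f) n t" unfolding D_def Dmap_def using True by simp
        also have "\<dots> = \<sigma> n * (c * edge_deriv x f n t)" using ok_scale(2)[OF G f, of n t c] True by simp
        also have "\<dots> = fscale c (D f) n t" unfolding D_def Dmap_def fscale_def using True by (simp add: algebra_simps)
        finally show ?thesis .
      next
        case False
        then have "D (fscale c f) n t = 0" "D f n t = 0" unfolding D_def Dmap_def by auto
        then show ?thesis unfolding fscale_def by simp
      qed
    qed
  qed
qed



lemma N0_trivial:
  assumes "N = 0"
  shows "multiplicity_ev N x cond lam = 0"
  unfolding multiplicity_ev_def
proof (rule dim_trivial, rule subsetI)
  fix f assume "f \<in> eigenspace N x cond lam"
  then have "ok N x lam f" using eig_iff by auto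
  then have "f n t = 0" for n t using assms unfolding ok_def by auto
  then show "f \<in> {0}" by (auto simp: fun_eq_iff)
qed

theorem mainTheorem5:
  fixes N :: nat and x :: "nat \<Rightarrow> real" and V :: "nat set set" and k :: nat
  assumes "metric_tree N x V" and "1 \<le> k"
  shows "lap_eigenvalue N x (antistandard_cond x V) k = lap_eigenvalue N x (standard_cond x V) (Suc k)"
proof -
  have T: "metric_tree N x V" by fact
  have G: "metric_graph N x V" using T unfolding metric_tree_def by blast
  define ms where "ms = multiplicity_ev N x (standard_cond x V)"
  define ma where "ma = multiplicity_ev N x (antistandard_cond x V)"
  have eqnz: "ma lam = ms lam" if "lam \<noteq> 0" for lam
    unfolding ma_def ms_def multiplicity_ev_def using iso_dims[OF T that] .
  have negs: "ms lam = 0" if "lam < 0" for lam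
    unfolding ms_def multiplicity_ev_def using dim_neg(1)[OF G that] .
  have a0: "ma 0 = 0" unfolding ma_def multiplicity_ev_def using dim_as0[OF T] .
  have s0: "ms 0 = 1" if "0 < N" unfolding ms_def multiplicity_ev_def using dim_st0[OF T that] .
  have sN0: "ms lam = 0" if "N = 0" for lam unfolding ms_def using N0_trivial[OF that] .
  define Ss where "Ss mu = {lam. lam \<le> mu \<and> 0 < ms lam}" for mu
  define Sa where "Sa mu = {lam. lam \<le> mu \<and> 0 < ma lam}" for mu
  have SaSs: "Sa mu = Ss mu - {0}" for mu
    unfolding Sa_def Ss_def using eqnz a0 by (auto, metis less_irrefl)
  have cs: "ev_count N x (standard_cond x V) mu = (\<Sum>lam\<in>Ss mu. ms lam)" for mu
    unfolding ev_count_def Ss_def ms_def ..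
  have ca: "ev_count N x (antistandard_cond x V) mu = (\<Sum>lam\<in>Ss mu - {0}. ms lam)" for mu
  proof -
    have "ev_count N x (antistandard_cond x V) mu = (\<Sum>lam\<in>Sa mu. ma lam)"
      unfolding ev_count_def Sa_def ma_def ..
    also have "\<dots> = (\<Sum>lam\<in>Ss mu - {0}. ms lam)" unfolding SaSs using eqnz by (intro sum.cong) auto
    finally show ?thesis .
  qed
  have key: "(k \<le> ev_count N x (antistandard_cond x V) mu) \<longleftrightarrow> (Suc k \<le> ev_count N x (standard_cond x V) mu)" for mu
  proof (cases "finite (Ss mu)")
    case fin: True
    show ?thesis
    proof (cases "0 \<in> Ss mu")
      case True
      have "0 < N"
      proof (rule ccontr)
        assume "\<not> 0 < N"
        then have "ms 0 = 0" using sN0 by simp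
        then show False using True unfolding Ss_def by simp
      qed
      then have "ms 0 = 1" using s0 by simp
      have "(\<Sum>lam\<in>Ss mu. ms lam) = ms 0 + (\<Sum>lam\<in>Ss mu - {0}. ms lam)"
        using sum.remove[OF fin True] by simp
      then show ?thesis unfolding cs ca using \<open>ms 0 = 1\<close> by simp
    next
      case False
      have "Ss mu = {}"
      proof (rule ccontr)
        assume "Ss mu \<noteq> {}"
        then obtain lam where lam: "lam \<le> mu" "0 < ms lam" unfolding Ss_def by auto
        have "lam \<noteq> 0" using lam False unfolding Ss_def by auto
        moreover have "\<not> lam < 0" using negs lam by (metis less_irrefl)
        ultimately have "0 < lam" by simp
        then have "0 \<le> mu" using lam by simp
        have "0 < N" using sN0 lam by (metis gr0I less_irrefl)
        then have "ms 0 = 1" using s0 by simp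
        then have "0 \<in> Ss mu" unfolding Ss_def using \<open>0 \<le> mu\<close> by simp
        then show False using False by simp
      qed
      then show ?thesis unfolding cs ca using assms(2) by simp
    qed
  next
    case False
    then have "infinite (Ss mu - {0})" by simp
    then show ?thesis unfolding cs ca using False assms(2) by simp
  qed
  show ?thesis unfolding lap_eigenvalue_def using key by simp
qed


end
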